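(* Consider the coordination game described in the context, in which each agent $i$ observes $x_i=\theta+\epsilon^x_i$ and $y_i=A+\epsilon^y_i$, where $(\epsilon^x_i,\epsilon^y_i)$ has joint density $f(\epsilon^x,\epsilon^y)$. Suppose that $\epsilon^y_i\in[-\sigma,\sigma]$, i.e. $f(\epsilon^x,\epsilon^y)=0$ for all $|\epsilon^y|>\sigma$ and all $\epsilon^x\in\mathbb{R}$, where $0<\sigma<\tfrac12$. Then there exists a continuum (an uncountable family) of distinct equilibria $A(\cdot)$.
   Context: A unit mass of agents $i\in[0,1]$ each choose $a_i\in\{0,1\}$ ($a_i=1$: attack the status quo). The aggregate attack is $A=\int_0^1 a_i\,di$. The status quo has strength $\theta\in\mathbb{R}$ and is abandoned iff $A\ge\theta$. An attacking agent pays cost $c\in(0,1)$ and gets $1$ if the status quo is abandoned (net $1-c$), otherwise net $-c$; not attacking yields $0$. Agents hold an (improper) uniform prior over $\theta$ on $\mathbb{R}$. Agent $i$ receives private signals $x_i=\theta+\epsilon^x_i$ and $y_i=A+\epsilon^y_i$, where the error pairs $(\epsilon^x_i,\epsilon^y_i)$ are independent across agents with joint density $f$; the structure is common knowledge. Given a conjectured (measurable) aggregate attack function $A:\mathbb{R}\to[0,1]$, the posterior of an agent with signals $(x,y)$ is $P[\theta\in S\mid x,y,A(\cdot)]=\int_S f(x-\theta,y-A(\theta))\,d\theta\big/\int_{\mathbb{R}} f(x-\theta,y-A(\theta))\,d\theta$ (equivalently, the limit as $N\to\infty$ of the posterior under a uniform prior on $[t-N,t+N]$). An agent attacks iff $P[A(\theta)\ge\theta\mid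 x,y,A(\cdot)]\ge c$. An equilibrium is a function $A:\mathbb{R}\to[0,1]$ such that for all $\theta\in\mathbb{R}$, $A(\theta)=\int_{\mathbb{R}^2}\chi\{(\epsilon^x,\epsilon^y): P[A(\theta')\ge\theta'\mid x=\theta+\epsilon^x,\,y=A(\theta)+\epsilon^y,\,A(\cdot)]\ge c\}\,f(\epsilon^x,\epsilon^y)\,d\epsilon^x d\epsilon^y$, where $\theta'$ denotes the random fundamental under the posterior and $\chi$ is the indicator function. *)

theory Defs
  imports "HOL-Analysis.Analysis"
begin

text \<open>Posterior probability of a set S of fundamentals, for an agent with signals (x,y),
  given the joint error density f and the conjectured aggregate attack function A
  (improper uniform prior). Real division, so 0/0 = 0 by convention.\<close>
definition posterior :: "(real \<Rightarrow> real \<Rightarrow> real) \<Rightarrow> (real \<Rightarrow> real) \<Rightarrow> real \<Rightarrow> real \<Rightarrow> real set \<Rightarrow> real" where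
  "posterior f A x y S =
     (\<integral>\<theta>. indicator S \<theta> * f (x - \<theta>) (y - A \<theta>) \<partial>lborel) /
     (\<integral>\<theta>. f (x - \<theta>) (y - A \<theta>) \<partial>lborel)"

text \<open>An agent with signals (x,y) attacks iff the posterior probability that the
  status quo is abandoned (A(theta) >= theta) is at least c.\<close>
definition attacks :: "(real \<Rightarrow> real \<Rightarrow> real) \<Rightarrow> real \<Rightarrow> (real \<Rightarrow> real) \<Rightarrow> real \<Rightarrow> real \<Rightarrow> bool" where
  "attacks f c A x y \<longleftrightarrow> c \<le> posterior f A x y {\<theta>. \<theta> \<le> A \<theta>}"

definition is_equilibrium :: "(real \<Rightarrow> real \<Rightarrow> real) \<Rightarrow> real \<Rightarrow> (real \<Rightarrow> real) \<Rightarrow> bool" where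
  "is_equilibrium f c A \<longleftrightarrow>
     A \<in> borel_measurable borel \<and>
     (\<forall>\<theta>. 0 \<le> A \<theta> \<and> A \<theta> \<le> 1) \<and>
     (\<forall>\<theta>. A \<theta> =
        (\<integral>e. indicator {e :: real \<times> real. attacks f c A (\<theta> + fst e) (A \<theta> + snd e)} e
               * f (fst e) (snd e) \<partial>lborel))"

end

theory Submission
  imports Defs
begin

lemma key1:
  fixes g :: "real \<Rightarrow> real"
  assumes gi: "integrable lborel g" and gn: "\<And>x. 0 \<le> g x"
  shows "AE x in lborel. (\<integral>u. indicator {x..} u * g u \<partial>lborel) = 0 \<longrightarrow> g x = 0"
proof -
  define G where "G s = (\<integral>u. indicator {s..} u * g u \<partial>lborel)" for s
  have gm[measurable]: "g \<in> borel_measurable borel" using gi by auto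
  have int: "integrable lborel (\<lambda>u. indicator {s..} u * g u)" for s
    using integrable_mult_indicator[OF _ gi, of "{s..}"] by simp
  have Gn: "0 \<le> G s" for s unfolding G_def by (intro integral_nonneg_AE AE_I2) (auto simp: gn)
  have Gm: "G s' \<le> G s" if "s \<le> s'" for s s'
    unfolding G_def using that
    by (intro integral_mono[OF int int]) (auto simp: indicator_def gn)
  have AEq: "AE u in lborel. q \<le> u \<longrightarrow> g u = 0" if "G q = 0" for q
  proof -
    have "AE u in lborel. indicator {q..} u * g u = 0"
      using that unfolding G_def
      by (subst integral_nonneg_eq_0_iff_AE[symmetric]) (auto simp: int gn)
    then show ?thesis by eventually_elim (auto simp: indicator_def)
  qed
  define S where "S = {x. G x = 0}"
  define Q where "Q = S \<inter> \<rat>"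
  have cQ: "countable Q" unfolding Q_def
    by (rule countable_subset[OF _ countable_rat]) auto
  have A1: "AE u in lborel. \<forall>q\<in>Q. q \<le> u \<longrightarrow> g u = 0"
    using cQ by (subst AE_ball_countable) (auto simp: Q_def S_def intro: AEq)
  define M where "M = {x \<in> S. \<forall>y\<in>S. x \<le> y}"
  have cM: "countable M"
  proof (cases "M = {}")
    case False
    then obtain m where m: "m \<in> M" by auto
    have "M \<subseteq> {m}" using m unfolding M_def by (auto intro: order.antisym)
    then show ?thesis using countable_subset by blast
  qed simp
  have A2: "AE u in lborel. u \<notin> M"
    by (intro AE_not_in countable_imp_null_set_lborel cM)
  show ?thesis
    using A1 A2
  proof eventually_elim
    case (elim u)
    show ?case
    proof
      assume "(\<integral>v. indicator {u..} v * g v \<partial>lborel) = 0"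
      then have uS: "u \<in> S" by (simp add: S_def G_def)
      with elim obtain y where y: "y \<in> S" "y < u" unfolding M_def by force
      obtain q where q: "q \<in> \<rat>" "y < q" "q < u" using Rats_dense_in_real[OF y(2)] by blast
      have "G q = 0" using Gm[of y q] Gn[of q] y q by (simp add: S_def)
      then have "q \<in> Q" using q by (simp add: Q_def S_def)
      then show "g u = 0" using elim q(3) by force
    qed
  qed
qed

lemma key2:
  fixes f :: "real \<Rightarrow> real \<Rightarrow> real" and d :: real
  assumes f_meas: "(\<lambda>e :: real \<times> real. f (fst e) (snd e)) \<in> borel_measurable borel"
    and f_nonneg: "\<And>a b. 0 \<le> f a b"
    and f_int: "integrable lborel (\<lambda>e :: real \<times> real. f (fst e) (snd e))"
    and d: "0 \<le> d"
  shows "AE e in (lborel :: (real \<times> real) measure).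
     (\<integral>u. indicator {fst e - d..} u * f u (snd e) \<partial>lborel) = 0 \<longrightarrow> f (fst e) (snd e) = 0"
proof -
  have fm[measurable]: "(\<lambda>e. f (fst e) (snd e)) \<in> borel_measurable (lborel \<Otimes>\<^sub>M lborel)"
    using f_meas by (simp add: lborel_prod)
  have fm2[measurable]: "case_prod f \<in> borel_measurable (lborel \<Otimes>\<^sub>M lborel)"
    using fm by (simp add: case_prod_beta')
  have fi: "integrable (lborel \<Otimes>\<^sub>M lborel) (case_prod f)"
    using f_int by (simp add: lborel_prod case_prod_beta')
  have ind: "indicator {s..} u = (if s \<le> u then 1 else 0 :: real)" for s u :: real
    by (simp add: indicator_def)
  define P where "P x y \<longleftrightarrow> ((\<integral>u. (if x - d \<le> u then 1 else 0) * f u y \<partial>lborel) = 0 \<longrightarrow> f x y = 0)" for x y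
  have sets: "{x\<in>space (lborel \<Otimes>\<^sub>M lborel). P (fst x) (snd x)} \<in> sets (lborel \<Otimes>\<^sub>M lborel)"
    unfolding P_def by measurable
  have "AE y in lborel. AE x in lborel. P x y"
    using lborel_pair.AE_integrable_snd[OF fi]
  proof eventually_elim
    case (elim y)
    have Gn: "0 \<le> (\<integral>u. indicator {s..} u * f u y \<partial>lborel)" for s
      by (intro integral_nonneg_AE AE_I2) (auto simp: f_nonneg)
    have int: "integrable lborel (\<lambda>u. indicator {s..} u * f u y)" for s
      using integrable_mult_indicator[OF _ elim, of "{s..}"] by simp
    have Gm: "(\<integral>u. indicator {s'..} u * f u y \<partial>lborel) \<le> (\<integral>u. indicator {s..} u * f u y \<partial>lborel)" if "s \<le> s'" for s s'
      using that by (intro integral_mono[OF int int]) (auto simp: indicator_def f_nonneg)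
    show ?case
      using key1[OF elim f_nonneg]
    proof eventually_elim
      case (elim x)
      then show ?case
        using Gm[of "x - d" x] Gn[of x] d unfolding P_def ind[symmetric] by auto
    qed
  qed
  then have "AE x in lborel. AE y in lborel. P x y"
    using lborel_pair.AE_commute[OF sets] by simp
  then have "AE e in lborel \<Otimes>\<^sub>M lborel. P (fst e) (snd e)"
    using lborel_pair.AE_pair_iff[OF sets] by simp
  then show ?thesis
    unfolding lborel_prod P_def ind by simp
qed

lemma meas_att:
  fixes f :: "real \<Rightarrow> real \<Rightarrow> real" and A :: "real \<Rightarrow> real"
  assumes f_meas: "(\<lambda>e :: real \<times> real. f (fst e) (snd e)) \<in> borel_measurable borel"
  and Am[measurable]: "A \<in> borel_measurable borel"
  and Sm: "S \<in> sets borel"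
  shows "{e :: real \<times> real. c \<le> posterior f A (\<theta> + fst e) (a + snd e) S} \<in> sets lborel"
proof -
  have fm: "(\<lambda>e. f (fst e) (snd e)) \<in> borel_measurable (borel \<Otimes>\<^sub>M borel)"
    using f_meas by (simp add: borel_prod)
  have g: "(\<lambda>p::(real\<times>real)\<times>real. (\<theta> + fst (fst p) - snd p, a + snd (fst p) - A (snd p))) \<in> measurable ((borel \<Otimes>\<^sub>M borel) \<Otimes>\<^sub>M borel) (borel \<Otimes>\<^sub>M borel)"
    by measurable
  have "(\<lambda>p::(real\<times>real)\<times>real. f (\<theta> + fst (fst p) - snd p) (a + snd (fst p) - A (snd p))) \<in> borel_measurable ((borel \<Otimes>\<^sub>M borel) \<Otimes>\<^sub>M borel)"
    using measurable_comp[OF g fm] by (simp add: o_def)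
  then have h1: "(\<lambda>p::(real\<times>real)\<times>real. f (\<theta> + fst (fst p) - snd p) (a + snd (fst p) - A (snd p))) \<in> borel_measurable (lborel \<Otimes>\<^sub>M lborel)"
    by (subst measurable_cong_sets[OF sets_pair_measure_cong[OF sets_lborel sets_lborel] refl]) (simp add: borel_prod)
  have ind: "(\<lambda>p::(real\<times>real)\<times>real. indicator S (snd p) :: real) \<in> borel_measurable (lborel \<Otimes>\<^sub>M lborel)"
    using Sm by measurable
  have h2: "(\<lambda>p::(real\<times>real)\<times>real. indicator S (snd p) * f (\<theta> + fst (fst p) - snd p) (a + snd (fst p) - A (snd p))) \<in> borel_measurable (lborel \<Otimes>\<^sub>M lborel)"
    using borel_measurable_times[OF ind h1] .
  have n: "(\<lambda>e. \<integral>y. indicator S y * f (\<theta> + fst e - y) (a + snd e - A y) \<partial>lborel) \<in> borel_measurable (lborel :: (real \<times> real) measure)"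
    using h2 by (intro lborel.borel_measurable_lebesgue_integral) (simp add: case_prod_beta')
  have d: "(\<lambda>e. \<integral>y. f (\<theta> + fst e - y) (a + snd e - A y) \<partial>lborel) \<in> borel_measurable (lborel :: (real \<times> real) measure)"
    using h1 by (intro lborel.borel_measurable_lebesgue_integral) (simp add: case_prod_beta')
  have "(\<lambda>e. posterior f A (\<theta> + fst e) (a + snd e) S) \<in> borel_measurable (lborel :: (real \<times> real) measure)"
    unfolding posterior_def using borel_measurable_divide[OF n d] by simp
  then have "{e \<in> space lborel. c \<le> posterior f A (\<theta> + fst e) (a + snd e) S} \<in> sets (lborel :: (real \<times> real) measure)"
    by measurable
  then show ?thesis by simp
qed

lemma equil:
  fixes f :: "real \<Rightarrow> real \<Rightarrow> real" and c \<sigma> t :: real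
  assumes c: "0 < c" "c < 1"
    and f_meas: "(\<lambda>e :: real \<times> real. f (fst e) (snd e)) \<in> borel_measurable borel"
    and f_nonneg: "\<And>a b. 0 \<le> f a b"
    and f_int: "integrable lborel (\<lambda>e :: real \<times> real. f (fst e) (snd e))"
    and f_total: "(\<integral>e. f (fst e) (snd e) \<partial>(lborel :: (real \<times> real) measure)) = 1"
    and \<sigma>: "0 < \<sigma>" "\<sigma> < 1/2"
    and supp: "\<And>a b. \<bar>b\<bar> > \<sigma> \<Longrightarrow> f a b = 0"
    and t: "0 \<le> t" "t \<le> 1"
  shows "is_equilibrium f c (\<lambda>\<theta>. if \<theta> \<le> t then 1 else 0)"
proof -
  define A :: "real \<Rightarrow> real" where "A = (\<lambda>\<theta>. if \<theta> \<le> t then 1 else 0)"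
  have Am[measurable]: "A \<in> borel_measurable borel" unfolding A_def by measurable
  have fm[measurable]: "(\<lambda>e. f (fst e) (snd e)) \<in> borel_measurable (lborel \<Otimes>\<^sub>M lborel)"
    using f_meas by (simp add: lborel_prod)
  have fm2[measurable]: "case_prod f \<in> borel_measurable (lborel \<Otimes>\<^sub>M lborel)"
    using fm by (simp add: case_prod_beta')
  have Sset: "{\<theta>. \<theta> \<le> A \<theta>} = {..t}" using t by (auto simp: A_def)
  have eq: "A \<theta> = (\<integral>e. indicator {e :: real \<times> real. attacks f c A (\<theta> + fst e) (A \<theta> + snd e)} e
               * f (fst e) (snd e) \<partial>lborel)" for \<theta>
  proof (cases "\<theta> \<le> t")
    case False
    have "indicator {e :: real \<times> real. attacks f c A (\<theta> + fst e) (A \<theta> + snd e)} e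
               * f (fst e) (snd e) = 0" for e
    proof (cases "f (fst e) (snd e) = 0")
      case nz: False
      then have e2: "\<bar>snd e\<bar> \<le> \<sigma>" using supp by force
      have "(\<integral>\<theta>'. indicator {..t} \<theta>' * f (\<theta> + fst e - \<theta>') (A \<theta> + snd e - A \<theta>') \<partial>lborel) = 0"
      proof -
        have "indicator {..t} \<theta>' * f (\<theta> + fst e - \<theta>') (A \<theta> + snd e - A \<theta>') = 0" for \<theta>'
        proof (cases "\<theta>' \<le> t")
          case True
          then show ?thesis using False e2 \<sigma> by (auto simp: A_def intro!: supp)
        qed simp
        note pz = this
        have "(\<integral>\<theta>'. indicator {..t} \<theta>' * f (\<theta> + fst e - \<theta>') (A \<theta> + snd e - A \<theta>') \<partial>lborel) = (\<integral>\<theta>'. (0::real) \<partial>(lborel::real measure))"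
          by (simp only: pz)
        then show ?thesis by simp
      qed
      then have "\<not> attacks f c A (\<theta> + fst e) (A \<theta> + snd e)"
        unfolding attacks_def posterior_def Sset using c by simp
      then show ?thesis by simp
    qed simp
    note pz = this
    have "(\<integral>e. indicator {e :: real \<times> real. attacks f c A (\<theta> + fst e) (A \<theta> + snd e)} e
               * f (fst e) (snd e) \<partial>lborel) = (\<integral>e. (0::real) \<partial>(lborel::(real\<times>real) measure))" by (rule Bochner_Integration.integral_cong[OF refl pz])
    moreover have "A \<theta> = 0" using False by (simp add: A_def)
    ultimately show ?thesis by simp
  next
    case True
    define d where "d = t - \<theta>"
    have d: "0 \<le> d" using True by (simp add: d_def)
    have meas_att: "{e :: real \<times> real. attacks f c A (\<theta> + fst e) (A \<theta> + snd e)} \<in> sets lborel"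
      unfolding attacks_def Sset by (rule meas_att[OF f_meas Am]) simp
    have "(\<integral>e. indicator {e :: real \<times> real. attacks f c A (\<theta> + fst e) (A \<theta> + snd e)} e
               * f (fst e) (snd e) \<partial>lborel) = (\<integral>e. f (fst e) (snd e) \<partial>(lborel :: (real \<times> real) measure))"
    proof (rule integral_cong_AE)
      show "(\<lambda>e. indicator {e :: real \<times> real. attacks f c A (\<theta> + fst e) (A \<theta> + snd e)} e
               * f (fst e) (snd e)) \<in> borel_measurable lborel"
      proof -
        have fml: "(\<lambda>e. f (fst e) (snd e)) \<in> borel_measurable (lborel :: (real \<times> real) measure)"
          using f_meas by simp
        show ?thesis using borel_measurable_times[OF borel_measurable_indicator[OF meas_att] fml] by simp
      qed
      show "(\<lambda>e. f (fst e) (snd e)) \<in> borel_measurable (lborel :: (real \<times> real) measure)"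
        using f_meas by simp
      show "AE e in lborel. indicator {e :: real \<times> real. attacks f c A (\<theta> + fst e) (A \<theta> + snd e)} e
               * f (fst e) (snd e) = f (fst e) (snd e)"
        using key2[OF f_meas f_nonneg f_int d]
      proof eventually_elim
        case (elim e)
        show ?case
        proof (cases "f (fst e) (snd e) = 0")
          case nz: False
          then have e2: "\<bar>snd e\<bar> \<le> \<sigma>" using supp by force
          have Dne: "(\<integral>u. indicator {fst e - d..} u * f u (snd e) \<partial>lborel) \<noteq> 0"
            using elim nz by auto
          have pw: "f (\<theta> + fst e - \<theta>') (A \<theta> + snd e - A \<theta>') = indicator {..t} \<theta>' * f (\<theta> + fst e - \<theta>') (snd e)" for \<theta>'
          proof (cases "\<theta>' \<le> t")
            case False
            then show ?thesis using True e2 \<sigma> by (auto simp: A_def intro!: supp)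
          qed (use True in \<open>simp add: A_def\<close>)
          have pw2: "indicator {..t} \<theta>' * f (\<theta> + fst e - \<theta>') (A \<theta> + snd e - A \<theta>') = indicator {..t} \<theta>' * f (\<theta> + fst e - \<theta>') (snd e)" for \<theta>'
            using pw[of \<theta>'] by (auto simp: indicator_def)
          have sub: "(\<integral>u. indicator {fst e - d..} u * f u (snd e) \<partial>lborel)
             = (\<integral>x. indicator {..t} x * f (\<theta> + fst e - x) (snd e) \<partial>lborel)"
            by (subst lborel_integral_real_affine[where c="-1" and t="\<theta> + fst e"])
               (auto simp: d_def indicator_def intro!: Bochner_Integration.integral_cong)
          have "posterior f A (\<theta> + fst e) (A \<theta> + snd e) {\<theta>. \<theta> \<le> A \<theta>} = 1"
            unfolding posterior_def Sset pw2 unfolding pw using Dne sub by simp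
          then have "attacks f c A (\<theta> + fst e) (A \<theta> + snd e)"
            unfolding attacks_def using c by simp
          then show ?thesis by simp
        qed simp
      qed
    qed
    moreover have "A \<theta> = 1" using True by (simp add: A_def)
    ultimately show ?thesis using f_total by simp
  qed
  have bnd: "\<forall>\<theta>. 0 \<le> A \<theta> \<and> A \<theta> \<le> 1" by (simp add: A_def)
  have "is_equilibrium f c A"
    unfolding is_equilibrium_def using Am bnd eq by blast
  then show ?thesis unfolding A_def .
qed

theorem proposition1:
  fixes f :: "real \<Rightarrow> real \<Rightarrow> real" and c \<sigma> :: real
  assumes c: "0 < c" "c < 1"
    and f_meas: "(\<lambda>e :: real \<times> real. f (fst e) (snd e)) \<in> borel_measurable borel"
    and f_nonneg: "\<And>a b. 0 \<le> f a b"
    and f_int: "integrable lborel (\<lambda>e :: real \<times> real. f (fst e) (snd e))"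
    and f_total: "(\<integral>e. f (fst e) (snd e) \<partial>(lborel :: (real \<times> real) measure)) = 1"
    and \<sigma>: "0 < \<sigma>" "\<sigma> < 1/2"
    and supp: "\<And>a b. \<bar>b\<bar> > \<sigma> \<Longrightarrow> f a b = 0"
  shows "uncountable {A. is_equilibrium f c A}"
proof
  assume cnt: "countable {A. is_equilibrium f c A}"
  define F :: "real \<Rightarrow> real \<Rightarrow> real" where "F t = (\<lambda>\<theta>. if \<theta> \<le> t then 1 else 0)" for t
  have "F ` {0..1} \<subseteq> {A. is_equilibrium f c A}"
    using equil[OF c f_meas f_nonneg f_int f_total \<sigma> supp] by (auto simp: F_def)
  then have "countable (F ` {0..1})" using cnt countable_subset by blast
  moreover have "inj_on F {0..1}"
  proof (rule inj_onI)
    fix s t :: real assume "F s = F t"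
    then have "F s s = F t s" "F s t = F t t" by auto
    then show "s = t" by (auto simp: F_def split: if_splits)
  qed
  ultimately have "countable {0..1::real}" using countable_image_inj_on by blast
  then show False using uncountable_closed_interval[of 0 1] by simp
qed

end
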